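(* For every $f>0$, the minimum possible root-mean-square size of a planar configuration with cohesion $f$ is $$\min\{b(\mathbf r):\ \mathbf r\in\mathfrak R,\ f(\mathbf r)=f\}=\frac{C(\mathbf m)}{f\sqrt{\sum_j m_j}},$$ and this minimum is achieved on every trajectory $\mathbf r_\lambda(t)$ ($\lambda>0$, generated by any minimizer of $f+\lambda g$), i.e. $b(\mathbf r_\lambda(t))=\frac{C(\mathbf m)}{f(\mathbf r_\lambda(t))\sqrt{\sum_j m_j}}$ for all $t\ge0$.
   Context: Fix $N\ge 2$, masses $\mathbf m=(m_1,\dots,m_N)$, $m_i>0$, and $\gamma>0$. Planar configuration space $\mathfrak R=\{\mathbf r=(\mathbf r_1,\dots,\mathbf r_N)\in(\mathbb R^2)^N:\ \mathbf r_i\neq\mathbf r_j \text{ for } i\neq j\}$; cohesion $f(\mathbf r)=\sum_{i<j}\frac{\gamma m_im_j}{|\mathbf r_j-\mathbf r_i|}$; $g(\mathbf r)=\sum_i m_i|\mathbf r_i|^2$; root-mean-square size $b(\mathbf r)=\sqrt{\sum_i\beta_i|\mathbf r_i|^2}$ with $\beta_i=m_i/\sum_j m_j$ (so $g=b^2\sum_jm_j$). Let $C(\mathbf m)=\min\{f(\mathbf r):\mathbf r\in\mathfrak R,\ g(\mathbf r)=1\}$. For $\lambda>0$ and a minimizer $\mathbf r_\lambda=(\mathbf r_{1\lambda},\dots,\mathbf r_{N\lambda})$ of $f+\lambda g$ on $\mathfrak R$, with $\mathbf r_{i\lambda}=|\mathbf r_{i\lambda}|(\cos\varphi_{i\lambda},\sin\varphi_{i\lambda})$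 and $\omega=\sqrt{2\lambda}$, the trajectory $\mathbf r_\lambda(t)$ has components $\mathbf r_{i\lambda}(t)=|\mathbf r_{i\lambda}|(\cos(\varphi_{i\lambda}+\omega t),\sin(\varphi_{i\lambda}+\omega t))$, $t\ge0$. *)

theory Defs
  imports "HOL-Analysis.Analysis"
begin

text \<open>Planar configurations of N bodies: points r 0, ..., r (N-1) in the plane
  (real \<times> real), only indices i < N are relevant.\<close>

type_synonym config = "nat \<Rightarrow> real \<times> real"

definition in_config_space :: "nat \<Rightarrow> config \<Rightarrow> bool" where
  "in_config_space N r \<longleftrightarrow> (\<forall>i<N. \<forall>j<N. i \<noteq> j \<longrightarrow> r i \<noteq> r j)"

definition cohesion :: "nat \<Rightarrow> (nat \<Rightarrow> real) \<Rightarrow> real \<Rightarrow> config \<Rightarrow> real" where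
  "cohesion N m \<gamma> r =
     (\<Sum>j<N. \<Sum>i<j. \<gamma> * m i * m j / norm (r j - r i))"

definition gfun :: "nat \<Rightarrow> (nat \<Rightarrow> real) \<Rightarrow> config \<Rightarrow> real" where
  "gfun N m r = (\<Sum>i<N. m i * (norm (r i))\<^sup>2)"

definition total_mass :: "nat \<Rightarrow> (nat \<Rightarrow> real) \<Rightarrow> real" where
  "total_mass N m = (\<Sum>j<N. m j)"

definition rms_size :: "nat \<Rightarrow> (nat \<Rightarrow> real) \<Rightarrow> config \<Rightarrow> real" where
  "rms_size N m r = sqrt (\<Sum>i<N. (m i / total_mass N m) * (norm (r i))\<^sup>2)"

text \<open>C(m) = min of the cohesion over configurations with g = 1 (written as Inf,
  which coincides with the minimum whenever it is attained).\<close>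
definition Cm :: "nat \<Rightarrow> (nat \<Rightarrow> real) \<Rightarrow> real \<Rightarrow> real" where
  "Cm N m \<gamma> = Inf {cohesion N m \<gamma> r | r. in_config_space N r \<and> gfun N m r = 1}"

definition trajectory :: "nat \<Rightarrow> config \<Rightarrow> (nat \<Rightarrow> real) \<Rightarrow> real \<Rightarrow> real \<Rightarrow> config" where
  "trajectory N r \<phi> \<omega> t =
     (\<lambda>i. (norm (r i) * cos (\<phi> i + \<omega> * t), norm (r i) * sin (\<phi> i + \<omega> * t)))"

end

theory Submission
  imports Defs
begin

definition sc :: "real \<Rightarrow> config \<Rightarrow> config" where
  "sc s r = (\<lambda>i. s *\<^sub>R r i)"

lemma coh_sc: "s > 0 \<Longrightarrow> cohesion N m \<gamma> (sc s r) = cohesion N m \<gamma> r / s"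
proof -
  assume s: "s > 0"
  have "\<And>i j. norm (sc s r j - sc s r i) = s * norm (r j - r i)"
    using s by (simp add: sc_def flip: scaleR_diff_right)
  then show ?thesis
    by (simp add: cohesion_def sum_divide_distrib mult.commute)
qed

lemma g_sc: "gfun N m (sc s r) = s^2 * gfun N m r"
  by (simp add: gfun_def sc_def sum_distrib_left power_mult_distrib algebra_simps)

lemma cfg_sc: "s \<noteq> 0 \<Longrightarrow> in_config_space N (sc s r) = in_config_space N r"
  by (simp add: in_config_space_def sc_def)

lemma tm_pos: "N \<ge> 2 \<Longrightarrow> \<forall>i<N. m i > 0 \<Longrightarrow> total_mass N m > 0"
  unfolding total_mass_def by (rule sum_pos) (auto simp: lessThan_empty_iff)

lemma rms_eq: "total_mass N m > 0 \<Longrightarrow> rms_size N m r = sqrt (gfun N m r / total_mass N m)"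
  by (simp add: rms_size_def gfun_def sum_divide_distrib)

lemma coh_nonneg: "\<forall>i<N. m i > 0 \<Longrightarrow> \<gamma> > 0 \<Longrightarrow> cohesion N m \<gamma> r \<ge> 0"
  unfolding cohesion_def by (intro sum_nonneg divide_nonneg_nonneg) (auto intro!: mult_nonneg_nonneg simp: less_imp_le)

lemma g_nonneg: "\<forall>i<N. m i > 0 \<Longrightarrow> gfun N m r \<ge> 0"
  unfolding gfun_def by (intro sum_nonneg) auto

lemma term_le:
  assumes mpos: "\<forall>i<N. m i > 0" and g: "\<gamma> > 0" and i: "i < N" and j: "j < N" and ij: "i \<noteq> j"
  shows "\<gamma> * m i * m j / norm (r j - r i) \<le> cohesion N m \<gamma> r"
proof -
  have gen: "\<gamma> * m a * m b / norm (r b - r a) \<le> cohesion N m \<gamma> r" if "a < b" "b < N" for a b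
  proof -
    have "\<gamma> * m a * m b / norm (r b - r a) \<le> (\<Sum>i<b. \<gamma> * m i * m b / norm (r b - r i))"
      by (rule member_le_sum[where f="\<lambda>i. \<gamma> * m i * m b / norm (r b - r i)"])
         (use that mpos g in \<open>auto intro!: divide_nonneg_nonneg mult_nonneg_nonneg simp: less_imp_le\<close>)
    also have "\<dots> \<le> cohesion N m \<gamma> r" unfolding cohesion_def
      by (rule member_le_sum[where f="\<lambda>j. \<Sum>i<j. \<gamma> * m i * m j / norm (r j - r i)"])
         (use that mpos g in \<open>auto intro!: sum_nonneg divide_nonneg_nonneg mult_nonneg_nonneg simp: less_imp_le\<close>)
    finally show ?thesis .
  qed
  show ?thesis
  proof (cases "i < j")
    case True then show ?thesis using gen j by auto
  next
    case False
    then have "j < i" using ij by auto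
    then have "\<gamma> * m j * m i / norm (r i - r j) \<le> cohesion N m \<gamma> r" using gen i by auto
    then show ?thesis by (simp add: norm_minus_commute mult_ac)
  qed
qed

lemma coh_pos:
  assumes "N \<ge> 2" "\<forall>i<N. m i > 0" "\<gamma> > 0" "in_config_space N r"
  shows "cohesion N m \<gamma> r > 0"
proof -
  have "r 1 \<noteq> r 0" using assms unfolding in_config_space_def by auto
  then have "0 < \<gamma> * m 0 * m 1 / norm (r 1 - r 0)" using assms by auto
  also have "\<dots> \<le> cohesion N m \<gamma> r" using assms by (intro term_le) auto
  finally show ?thesis .
qed

lemma g_pos:
  assumes "N \<ge> 2" "\<forall>i<N. m i > 0" "in_config_space N r"
  shows "gfun N m r > 0"
proof -
  have "r 1 \<noteq> r 0" using assms unfolding in_config_space_def by auto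
  then obtain k where k: "k < N" "r k \<noteq> 0" using assms by (metis less_le_trans one_less_numeral_iff semiring_norm(76) zero_less_numeral)
  have "0 < m k * (norm (r k))\<^sup>2" using k assms by auto
  also have "\<dots> \<le> gfun N m r" unfolding gfun_def
    by (rule member_le_sum[where f="\<lambda>i. m i * (norm (r i))\<^sup>2"]) (use k assms in auto)
  finally show ?thesis .
qed

lemma Cm_le:
  assumes "N \<ge> 2" "\<forall>i<N. m i > 0" "\<gamma> > 0" "in_config_space N r"
  shows "Cm N m \<gamma> \<le> cohesion N m \<gamma> r * sqrt (gfun N m r)"
proof -
  have gp: "gfun N m r > 0" using g_pos assms by auto
  define s where "s = 1 / sqrt (gfun N m r)"
  have s: "s > 0" using gp by (simp add: s_def)
  have "gfun N m (sc s r) = 1" using gp by (simp add: g_sc s_def power_divide)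
  moreover have "in_config_space N (sc s r)" using cfg_sc s assms by auto
  moreover have "cohesion N m \<gamma> (sc s r) = cohesion N m \<gamma> r * sqrt (gfun N m r)"
    using s by (simp add: coh_sc s_def)
  ultimately have mem: "cohesion N m \<gamma> r * sqrt (gfun N m r) \<in>
     {cohesion N m \<gamma> r | r. in_config_space N r \<and> gfun N m r = 1}" by (metis (mono_tags, lifting) mem_Collect_eq)
  have "bdd_below {cohesion N m \<gamma> r | r. in_config_space N r \<and> gfun N m r = 1}"
    using coh_nonneg[OF assms(2,3)] by (auto intro!: bdd_belowI[where m=0])
  then show ?thesis unfolding Cm_def using mem by (rule cInf_lower[rotated])
qed

lemma Cm_eq:
  assumes "N \<ge> 2" "\<forall>i<N. m i > 0" "\<gamma> > 0" "in_config_space N r0"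
    and min: "\<And>r. in_config_space N r \<Longrightarrow> cohesion N m \<gamma> r0 * sqrt (gfun N m r0) \<le> cohesion N m \<gamma> r * sqrt (gfun N m r)"
  shows "Cm N m \<gamma> = cohesion N m \<gamma> r0 * sqrt (gfun N m r0)"
proof (rule antisym)
  show "Cm N m \<gamma> \<le> cohesion N m \<gamma> r0 * sqrt (gfun N m r0)" using Cm_le assms by auto
  have gp: "gfun N m r0 > 0" using g_pos assms by auto
  define s where "s = 1 / sqrt (gfun N m r0)"
  have s: "s > 0" using gp by (simp add: s_def)
  have "gfun N m (sc s r0) = 1" using gp by (simp add: g_sc s_def power_divide)
  moreover have "in_config_space N (sc s r0)" using cfg_sc s assms by auto
  ultimately have ne: "{cohesion N m \<gamma> r | r. in_config_space N r \<and> gfun N m r = 1} \<noteq> {}" by blast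
  show "cohesion N m \<gamma> r0 * sqrt (gfun N m r0) \<le> Cm N m \<gamma>"
    unfolding Cm_def
  proof (rule cInf_greatest[OF ne])
    fix x assume "x \<in> {cohesion N m \<gamma> r | r. in_config_space N r \<and> gfun N m r = 1}"
    then obtain r where "x = cohesion N m \<gamma> r" "in_config_space N r" "gfun N m r = 1" by blast
    then show "cohesion N m \<gamma> r0 * sqrt (gfun N m r0) \<le> x" using min[of r] by auto
  qed
qed

lemma alg: "u1^2+c1^2=1 \<Longrightarrow> u2^2+c2^2=1 \<Longrightarrow> (a*c1 - b*c2)^2 + (a*u1-b*u2)^2 = a^2+b^2-2*a*b*(c1*c2+u1*u2)"
  for a b c1 c2 u1 u2 :: real by algebra

lemma rot_norm2:
  "(norm ((a * cos x, a * sin x) - (b * cos y, b * sin y)))^2 = a^2 + b^2 - 2*a*b*cos (x - y)"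
proof -
  have "(norm ((a * cos x, a * sin x) - (b * cos y, b * sin y)))^2
     = (a * cos x - b * cos y)^2 + (a * sin x - b * sin y)^2"
    by (simp add: norm_prod_def power2_eq_square)
  also have "\<dots> = a^2 + b^2 - 2*a*b*(cos x * cos y + sin x * sin y)"
    by (rule alg) simp_all
  also have "\<dots> = a^2 + b^2 - 2*a*b*cos (x - y)" by (simp add: cos_diff)
  finally show ?thesis .
qed

lemma rot_norm:
  "norm ((a * cos (x+t), a * sin (x+t)) - (b * cos (y+t), b * sin (y+t))) =
   norm ((a * cos x, a * sin x) - (b * cos y, b * sin y))" for a b x y t :: real
proof -
  have "(norm ((a * cos (x+t), a * sin (x+t)) - (b * cos (y+t), b * sin (y+t))))^2 =
        (norm ((a * cos x, a * sin x) - (b * cos y, b * sin y)))^2"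
    by (simp only: rot_norm2) (simp add: algebra_simps)
  then show ?thesis by (rule power2_eq_imp_eq) simp_all
qed

lemma pol_norm: "norm (a * cos x, a * sin x) = \<bar>a\<bar>" for a x :: real
proof -
  have "(norm (a * cos x, a * sin x))^2 = a^2" using rot_norm2[of a x 0 0] by simp
  then show ?thesis by (metis norm_ge_zero real_sqrt_abs real_sqrt_unique)
qed


lemma coord_cont [continuous_intros]:
  "continuous_on S f \<Longrightarrow> continuous_on S (\<lambda>x. (f x :: 'a \<Rightarrow> 'b::topological_space) i)"
  by (rule continuous_on_product_then_coordinatewise)

lemma compact_box:
  fixes K :: "nat \<Rightarrow> (real \<times> real) set"
  assumes "\<And>i. compact (K i)"
  shows "compact {r :: config. \<forall>i. r i \<in> K i}"
proof -
  have "compactin (product_topology (\<lambda>_. euclidean) UNIV) (PiE UNIV K)"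
    using assms by (simp add: compactin_PiE)
  moreover have "PiE UNIV K = {r :: config. \<forall>i. r i \<in> K i}" by (auto simp: PiE_def Pi_def)
  ultimately show ?thesis by (simp add: euclidean_product_topology)
qed

lemma test_closed:
  fixes c :: "nat \<Rightarrow> nat \<Rightarrow> real"
  shows "closed {r :: config. \<forall>i<N. \<forall>j<N. i \<noteq> j \<longrightarrow> c i j \<le> norm (r j - r i)}"
proof -
  have "{r :: config. \<forall>i<N. \<forall>j<N. i \<noteq> j \<longrightarrow> c i j \<le> norm (r j - r i)} =
        (\<Inter>i\<in>{..<N}. \<Inter>j\<in>{..<N}-{i}. {r. c i j \<le> norm (r j - r i)})" by auto
  moreover have "closed {r :: config. c i j \<le> norm (r j - r i)}" for i j
    by (intro closed_Collect_le continuous_intros)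
  ultimately show ?thesis by (metis (no_types, lifting) closed_INT)
qed

lemma closed_g: "closed {r. gfun N m r = 1}"
  unfolding gfun_def by (intro closed_Collect_eq continuous_intros)


definition zr :: "nat \<Rightarrow> config \<Rightarrow> config" where
  "zr N r = (\<lambda>i. if i < N then r i else 0)"

lemma coh_zr: "cohesion N m \<gamma> (zr N r) = cohesion N m \<gamma> r"
  unfolding cohesion_def zr_def by (intro sum.cong refl) auto

lemma g_zr: "gfun N m (zr N r) = gfun N m r"
  unfolding gfun_def zr_def by (intro sum.cong refl) auto

lemma cfg_zr: "in_config_space N (zr N r) = in_config_space N r"
  unfolding in_config_space_def zr_def by auto

lemma Cm_attained:
  assumes N2: "N \<ge> 2" and mpos: "\<forall>i<N. m i > 0" and gpos: "\<gamma> > 0"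
  shows "\<exists>x. in_config_space N x \<and> gfun N m x = 1 \<and>
     (\<forall>r. in_config_space N r \<and> gfun N m r = 1 \<longrightarrow> cohesion N m \<gamma> x \<le> cohesion N m \<gamma> r)"
proof -
  define rs :: config where "rs = (\<lambda>i. (real i, 0))"
  have rs_cfg: "in_config_space N rs" by (simp add: in_config_space_def rs_def)
  have gp: "gfun N m rs > 0" using g_pos[OF N2 mpos rs_cfg] .
  define K0 where "K0 = cohesion N m \<gamma> rs * sqrt (gfun N m rs)"
  have K0: "K0 > 0" using coh_pos[OF N2 mpos gpos rs_cfg] gp by (simp add: K0_def)
  define r1 where "r1 = sc (1 / sqrt (gfun N m rs)) rs"
  have r1: "in_config_space N r1" "gfun N m r1 = 1" "cohesion N m \<gamma> r1 = K0"
    using gp rs_cfg by (simp_all add: r1_def cfg_sc g_sc coh_sc K0_def power_divide)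
  define Kb :: "nat \<Rightarrow> (real \<times> real) set" where
    "Kb i = (if i < N then cball 0 (sqrt (1 / m i)) else {0})" for i
  define D where "D = {r :: config. \<forall>i<N. \<forall>j<N. i \<noteq> j \<longrightarrow> \<gamma> * m i * m j / K0 \<le> norm (r j - r i)}"
  define S where "S = {r :: config. \<forall>i. r i \<in> Kb i} \<inter> {r. gfun N m r = 1} \<inter> D"
  have cS: "compact S" unfolding S_def D_def
    by (intro compact_Int_closed compact_box test_closed closed_g) (simp add: Kb_def)
  have memS: "zr N r \<in> S" if r: "in_config_space N r" "gfun N m r = 1" "cohesion N m \<gamma> r \<le> K0" for r
  proof -
    have "zr N r i \<in> Kb i" for i
    proof (cases "i < N")
      case True
      have "m i * (norm (r i))\<^sup>2 \<le> gfun N m r" unfolding gfun_def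
        by (rule member_le_sum[where f="\<lambda>i. m i * (norm (r i))\<^sup>2"]) (use True mpos in \<open>auto simp: less_imp_le\<close>)
      then have "(norm (r i))\<^sup>2 \<le> 1 / m i" using r mpos True by (simp add: field_simps)
      then have "norm (r i) \<le> sqrt (1 / m i)" by (simp add: real_le_rsqrt)
      then show ?thesis using True by (simp add: Kb_def zr_def)
    qed (simp add: Kb_def zr_def)
    moreover have "zr N r \<in> D" unfolding D_def mem_Collect_eq
    proof (intro allI impI)
      fix i j assume ij: "i < N" "j < N" "i \<noteq> j"
      have zc: "in_config_space N (zr N r)" using r cfg_zr by auto
      then have d: "norm (zr N r j - zr N r i) > 0" using ij unfolding in_config_space_def by auto
      have "\<gamma> * m i * m j / norm (zr N r j - zr N r i) \<le> K0"
        using term_le[OF mpos gpos ij, of "zr N r"] r coh_zr[of N m \<gamma> r] by linarith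
      then show "\<gamma> * m i * m j / K0 \<le> norm (zr N r j - zr N r i)"
        using d K0 by (simp add: field_simps)
    qed
    ultimately show ?thesis using r g_zr unfolding S_def by auto
  qed
  have neS: "S \<noteq> {}" using memS[OF r1(1,2)] r1(3) by auto
  have pos: "norm (x j - x i) \<noteq> 0" if "x \<in> S" "i < j" "j < N" for x i j
  proof -
    have "\<gamma> * m i * m j / K0 \<le> norm (x j - x i)" using that unfolding S_def D_def by auto
    moreover have "\<gamma> * m i * m j / K0 > 0" using that mpos gpos K0 by auto
    ultimately show ?thesis by linarith
  qed
  have cont: "continuous_on S (cohesion N m \<gamma>)"
    unfolding cohesion_def
    by (intro continuous_intros) (use pos in auto)
  obtain x where x: "x \<in> S" "\<And>y. y \<in> S \<Longrightarrow> cohesion N m \<gamma> x \<le> cohesion N m \<gamma> y"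
    using continuous_attains_inf[OF cS neS cont] by blast
  have xc: "in_config_space N x"
    unfolding in_config_space_def
  proof (intro allI impI)
    fix i j assume ij: "i < N" "j < N" "i \<noteq> j"
    have "\<gamma> * m j * m i / K0 \<le> norm (x i - x j)" using x(1) ij unfolding S_def D_def by auto
    moreover have "\<gamma> * m j * m i / K0 > 0" using ij mpos gpos K0 by auto
    ultimately show "x i \<noteq> x j" by auto
  qed
  have "cohesion N m \<gamma> x \<le> cohesion N m \<gamma> r" if "in_config_space N r" "gfun N m r = 1" for r
  proof (cases "cohesion N m \<gamma> r \<le> K0")
    case True
    then show ?thesis using x(2)[OF memS[OF that True]] coh_zr by metis
  next
    case False
    have "cohesion N m \<gamma> x \<le> K0" using x(2)[OF memS[OF r1(1,2)]] r1(3) coh_zr[of N m \<gamma> r1] by simp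
    then show ?thesis using False by linarith
  qed
  moreover have "gfun N m x = 1" using x(1) unfolding S_def by auto
  ultimately show ?thesis using xc by blast
qed


lemma traj_rms: "rms_size N m (trajectory N r0 \<phi> w t) = rms_size N m r0"
  unfolding rms_size_def trajectory_def by (simp add: pol_norm)

lemma traj_coh:
  assumes "\<forall>i<N. r0 i = (norm (r0 i) * cos (\<phi> i), norm (r0 i) * sin (\<phi> i))"
  shows "cohesion N m \<gamma> (trajectory N r0 \<phi> w t) = cohesion N m \<gamma> r0"
  unfolding cohesion_def
proof (intro sum.cong refl)
  fix j i assume j: "j \<in> {..<N}" and i: "i \<in> {..<j}"
  have "norm (trajectory N r0 \<phi> w t j - trajectory N r0 \<phi> w t i) = norm (r0 j - r0 i)"
  proof -
    have "norm (trajectory N r0 \<phi> w t j - trajectory N r0 \<phi> w t i) =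
      norm ((norm (r0 j) * cos (\<phi> j), norm (r0 j) * sin (\<phi> j)) - (norm (r0 i) * cos (\<phi> i), norm (r0 i) * sin (\<phi> i)))"
      unfolding trajectory_def by (rule rot_norm)
    also have "\<dots> = norm (r0 j - r0 i)" using assms i j by (metis lessThan_iff less_trans)
    finally show ?thesis .
  qed
  then show "\<gamma> * m i * m j / norm (trajectory N r0 \<phi> w t j - trajectory N r0 \<phi> w t i) =
         \<gamma> * m i * m j / norm (r0 j - r0 i)" by simp
qed

theorem theorem4p3:
  fixes N :: nat and m :: "nat \<Rightarrow> real" and \<gamma> :: real
  assumes N2: "N \<ge> 2"
    and mpos: "\<forall>i<N. m i > 0"
    and gpos: "\<gamma> > 0"
  shows
    "(\<forall>F > 0.
        (\<exists>r. in_config_space N r \<and> cohesion N m \<gamma> r = F \<and>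
             rms_size N m r = Cm N m \<gamma> / (F * sqrt (total_mass N m))) \<and>
        (\<forall>r. in_config_space N r \<and> cohesion N m \<gamma> r = F \<longrightarrow>
             Cm N m \<gamma> / (F * sqrt (total_mass N m)) \<le> rms_size N m r))
     \<and>
     (\<forall>lam > 0. \<forall>r0 \<phi>.
        in_config_space N r0 \<and>
        (\<forall>r. in_config_space N r \<longrightarrow>
             cohesion N m \<gamma> r0 + lam * gfun N m r0 \<le> cohesion N m \<gamma> r + lam * gfun N m r) \<and>
        (\<forall>i<N. r0 i = (norm (r0 i) * cos (\<phi> i), norm (r0 i) * sin (\<phi> i)))
        \<longrightarrow>
        (\<forall>t \<ge> 0.
           rms_size N m (trajectory N r0 \<phi> (sqrt (2 * lam)) t) =
           Cm N m \<gamma> / (cohesion N m \<gamma> (trajectory N r0 \<phi> (sqrt (2 * lam)) t)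
                        * sqrt (total_mass N m))))"
proof (intro conjI allI impI)
  define M where "M = total_mass N m"
  have M: "M > 0" using tm_pos[OF N2 mpos] by (simp add: M_def)
  have rms: "rms_size N m r = sqrt (gfun N m r) / sqrt M" for r
    using rms_eq[OF tm_pos[OF N2 mpos]] by (simp add: M_def real_sqrt_divide)
  obtain x where x: "in_config_space N x" "gfun N m x = 1"
     "\<And>r. in_config_space N r \<Longrightarrow> gfun N m r = 1 \<Longrightarrow> cohesion N m \<gamma> x \<le> cohesion N m \<gamma> r"
    using Cm_attained[OF N2 mpos gpos] by blast
  have xmin: "cohesion N m \<gamma> x * sqrt (gfun N m x) \<le> cohesion N m \<gamma> r * sqrt (gfun N m r)"
    if r: "in_config_space N r" for r
  proof -
    have gp: "gfun N m r > 0" using g_pos N2 mpos r by auto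
    define s where "s = 1 / sqrt (gfun N m r)"
    have s: "s > 0" using gp by (simp add: s_def)
    have "gfun N m (sc s r) = 1" using gp by (simp add: g_sc s_def power_divide)
    moreover have "in_config_space N (sc s r)" using cfg_sc s r by auto
    moreover have "cohesion N m \<gamma> (sc s r) = cohesion N m \<gamma> r * sqrt (gfun N m r)"
      using s by (simp add: coh_sc s_def)
    ultimately show ?thesis using x(3)[of "sc s r"] x(2) by simp
  qed
  have Cx: "Cm N m \<gamma> = cohesion N m \<gamma> x"
    using Cm_eq[OF N2 mpos gpos x(1) xmin] x(2) by simp
  have Cpos: "cohesion N m \<gamma> x > 0" using coh_pos[OF N2 mpos gpos x(1)] .
  {
    fix F :: real assume F: "F > 0"
    define s where "s = cohesion N m \<gamma> x / F"
    have s: "s > 0" using F Cpos by (simp add: s_def)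
    show "\<exists>r. in_config_space N r \<and> cohesion N m \<gamma> r = F \<and>
             rms_size N m r = Cm N m \<gamma> / (F * sqrt (total_mass N m))"
    proof (intro exI conjI)
      show "in_config_space N (sc s x)" using cfg_sc s x(1) by auto
      show "cohesion N m \<gamma> (sc s x) = F" using s F Cpos by (simp add: coh_sc s_def)
      show "rms_size N m (sc s x) = Cm N m \<gamma> / (F * sqrt (total_mass N m))"
        using s F Cpos by (simp add: rms g_sc x(2) Cx s_def M_def)
    qed
  }
  {
    fix F :: real and r assume F: "F > 0" and r: "in_config_space N r \<and> cohesion N m \<gamma> r = F"
    have "Cm N m \<gamma> \<le> F * sqrt (gfun N m r)" using Cm_le[OF N2 mpos gpos, of r] r by simp
    then have "Cm N m \<gamma> / F \<le> sqrt (gfun N m r)" using F by (simp add: divide_le_eq mult.commute)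
    then show "Cm N m \<gamma> / (F * sqrt (total_mass N m)) \<le> rms_size N m r"
      using F M by (simp add: rms M_def[symmetric] divide_right_mono mult.commute flip: divide_divide_eq_left)
  }
  {
    fix lam :: real and r0 \<phi> and t :: real
    assume lam: "lam > 0"
      and H: "in_config_space N r0 \<and>
        (\<forall>r. in_config_space N r \<longrightarrow>
             cohesion N m \<gamma> r0 + lam * gfun N m r0 \<le> cohesion N m \<gamma> r + lam * gfun N m r) \<and>
        (\<forall>i<N. r0 i = (norm (r0 i) * cos (\<phi> i), norm (r0 i) * sin (\<phi> i)))"
      and t: "t \<ge> 0"
    have r0: "in_config_space N r0" using H by blast
    have g0: "gfun N m r0 > 0" using g_pos N2 mpos r0 by auto
    have c0: "cohesion N m \<gamma> r0 > 0" using coh_pos N2 mpos gpos r0 by auto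
    have min0: "cohesion N m \<gamma> r0 * sqrt (gfun N m r0) \<le> cohesion N m \<gamma> r * sqrt (gfun N m r)"
      if r: "in_config_space N r" for r
    proof -
      have gp: "gfun N m r > 0" using g_pos N2 mpos r by auto
      define s where "s = sqrt (gfun N m r0) / sqrt (gfun N m r)"
      have s: "s > 0" using gp g0 by (simp add: s_def)
      have "gfun N m (sc s r) = gfun N m r0" using gp g0 by (simp add: g_sc s_def power_divide)
      moreover have "in_config_space N (sc s r)" using cfg_sc s r by auto
      ultimately have "cohesion N m \<gamma> r0 \<le> cohesion N m \<gamma> (sc s r)" using H by fastforce
      then have "cohesion N m \<gamma> r0 \<le> cohesion N m \<gamma> r / s" using s by (simp add: coh_sc)
      then have "cohesion N m \<gamma> r0 * s \<le> cohesion N m \<gamma> r" using s by (simp add: field_simps)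
      then have "cohesion N m \<gamma> r0 * s * sqrt (gfun N m r) \<le> cohesion N m \<gamma> r * sqrt (gfun N m r)"
        by (rule mult_right_mono) (use gp in simp)
      then show ?thesis using gp by (simp add: s_def)
    qed
    have C0: "Cm N m \<gamma> = cohesion N m \<gamma> r0 * sqrt (gfun N m r0)"
      using Cm_eq[OF N2 mpos gpos r0 min0] .
    show "rms_size N m (trajectory N r0 \<phi> (sqrt (2 * lam)) t) =
           Cm N m \<gamma> / (cohesion N m \<gamma> (trajectory N r0 \<phi> (sqrt (2 * lam)) t)
                        * sqrt (total_mass N m))"
      using c0 by (simp add: traj_rms traj_coh[OF H[THEN conjunct2, THEN conjunct2]] C0 rms M_def)
  }
qed

end
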